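(* Assume the feasible set of the mixed-integer semidefinite program $$\min\{\langle C,X\rangle : \mathcal{A}(X)=b,\ X\succeq \mathbf{0},\ X_{ij}\in B_{ij}\ \forall (i,j)\in\mathcal{J}\}$$ is nonempty and bounded. Let $z_{LD}=\sup\{g(S,\lambda): S\succeq\mathbf{0},\ \lambda\in\mathbb{R}^{m_1}\}$ with $g(S,\lambda)=\min\{\langle C,X\rangle-\langle S,X\rangle+\lambda^\top(\mathcal{A}_1(X)-b_1): X\in P\}$, and let $\hat z$ denote the optimal value of $$\min\{\langle C,X\rangle: \mathcal{A}_1(X)=b_1,\ X\succeq\mathbf{0},\ X\in\mathrm{conv}(P)\},$$ provided it exists. Then $z_{LD}=\hat z$.
   Context: $\mathcal{S}^n$ denotes the real symmetric $n\times n$ matrices with $\langle X,Y\rangle=\mathrm{tr}(XY)$; $X\succeq\mathbf{0}$ means positive semidefinite. $C\in\mathcal{S}^n$, $b\in\mathbb{R}^m$, $\mathcal{A}:\mathcal{S}^n\to\mathbb{R}^m$ linear with $\mathcal{A}(X)_i=\langle A_i,X\rangle$. $\mathcal{J}\subseteq[n]\times[n]$ and for $(i,j)\in\mathcal{J}$, $B_{ij}\subseteq\mathbb{Z}$ is a finite set. The constraints $\mathcal{A}(X)=b$ are split into $\mathcal{A}_1(X)=b_1$ ($b_1\in\mathbb{R}^{m_1}$) and $\mathcal{A}_2(X)=b_2$, and $P=\{X\in\mathcal{S}^n:\mathcal{A}_2(X)=b_2,\ X_{ij}\in B_{ij}\ \forall(i,j)\in\mathcal{J}\}$, which is assumed bounded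 (e.g. after adding bounds on the continuous variables to $\mathcal{A}_2(X)=b_2$). *)

theory Defs
  imports "HOL-Analysis.Analysis"
begin

definition sym_mat :: "real^'n^'n \<Rightarrow> bool" where
  "sym_mat X \<longleftrightarrow> transpose X = X"

definition frob :: "real^'n^'n \<Rightarrow> real^'n^'n \<Rightarrow> real" where
  "frob X Y = trace (X ** Y)"

definition psd :: "real^'n^'n \<Rightarrow> bool" where
  "psd X \<longleftrightarrow> sym_mat X \<and> (\<forall>x. 0 \<le> x \<bullet> (X *v x))"

text \<open>The set P = {X in S^n : A2(X) = b2, X_ij in B_ij for (i,j) in J}; the m2 constraints
  of A2 are given by matrices A2 k, k < m2.\<close>
definition Pset :: "nat \<Rightarrow> (nat \<Rightarrow> real^'n^'n) \<Rightarrow> (nat \<Rightarrow> real) \<Rightarrow> ('n \<times> 'n) set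
                    \<Rightarrow> ('n \<Rightarrow> 'n \<Rightarrow> int set) \<Rightarrow> (real^'n^'n) set" where
  "Pset m2 A2 b2 J B = {X. sym_mat X \<and> (\<forall>k<m2. frob (A2 k) X = b2 k)
                           \<and> (\<forall>(i,j)\<in>J. X$i$j \<in> real_of_int ` B i j)}"

definition misdp_feas :: "nat \<Rightarrow> (nat \<Rightarrow> real^'n^'n) \<Rightarrow> (nat \<Rightarrow> real) \<Rightarrow>
     nat \<Rightarrow> (nat \<Rightarrow> real^'n^'n) \<Rightarrow> (nat \<Rightarrow> real) \<Rightarrow> ('n \<times> 'n) set
     \<Rightarrow> ('n \<Rightarrow> 'n \<Rightarrow> int set) \<Rightarrow> (real^'n^'n) set" where
  "misdp_feas m1 A1 b1 m2 A2 b2 J B =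
     {X. sym_mat X \<and> (\<forall>k<m1. frob (A1 k) X = b1 k) \<and> (\<forall>k<m2. frob (A2 k) X = b2 k)
         \<and> psd X \<and> (\<forall>(i,j)\<in>J. X$i$j \<in> real_of_int ` B i j)}"

text \<open>Lagrangian dual function g(S,lambda) = min over P (taken as an infimum in ereal;
  it is attained since P is compact and nonempty).\<close>
definition lag_g :: "real^'n^'n \<Rightarrow> nat \<Rightarrow> (nat \<Rightarrow> real^'n^'n) \<Rightarrow> (nat \<Rightarrow> real) \<Rightarrow>
     (real^'n^'n) set \<Rightarrow> real^'n^'n \<Rightarrow> (nat \<Rightarrow> real) \<Rightarrow> ereal" where
  "lag_g C m1 A1 b1 P S lam =
     (INF X\<in>P. ereal (frob C X - frob S X + (\<Sum>k<m1. lam k * (frob (A1 k) X - b1 k))))"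

text \<open>z_LD = sup over S psd and lambda in R^m1 (lambda represented by its first m1 entries).\<close>
definition z_LD :: "real^'n^'n \<Rightarrow> nat \<Rightarrow> (nat \<Rightarrow> real^'n^'n) \<Rightarrow> (nat \<Rightarrow> real) \<Rightarrow>
     (real^'n^'n) set \<Rightarrow> ereal" where
  "z_LD C m1 A1 b1 P =
     (SUP (S, lam) \<in> {S. psd S} \<times> UNIV. lag_g C m1 A1 b1 P S lam)"

definition relax_feas :: "nat \<Rightarrow> (nat \<Rightarrow> real^'n^'n) \<Rightarrow> (nat \<Rightarrow> real) \<Rightarrow>
     (real^'n^'n) set \<Rightarrow> (real^'n^'n) set" where
  "relax_feas m1 A1 b1 P =
     {X. (\<forall>k<m1. frob (A1 k) X = b1 k) \<and> psd X \<and> X \<in> convex hull P}"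

end

theory Submission
  imports Defs
begin


definition qf :: "'a set \<Rightarrow> ('a \<Rightarrow> 'a \<Rightarrow> real) \<Rightarrow> ('a \<Rightarrow> real) \<Rightarrow> real" where
  "qf I M x = (\<Sum>i\<in>I. \<Sum>j\<in>I. x i * M i j * x j)"

definition psdon :: "'a set \<Rightarrow> ('a \<Rightarrow> 'a \<Rightarrow> real) \<Rightarrow> bool" where
  "psdon I M \<longleftrightarrow> (\<forall>i\<in>I. \<forall>j\<in>I. M i j = M j i) \<and> (\<forall>x. 0 \<le> qf I M x)"

lemma qf_shift:
  assumes "finite I" "a \<in> I" "\<forall>i\<in>I. \<forall>j\<in>I. M i j = M j i"
  shows "qf I M (\<lambda>i. x i + (if i = a then t else 0)) =
         qf I M x + 2 * t * (\<Sum>i\<in>I. x i * M i a) + t * t * M a a"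
proof -
  have e: "(\<Sum>i\<in>I. \<Sum>j\<in>I. (x i + (if i = a then t else 0)) * M i j * (x j + (if j = a then t else 0)))
     = (\<Sum>i\<in>I. \<Sum>j\<in>I. x i * M i j * x j) + (\<Sum>i\<in>I. \<Sum>j\<in>I. x i * M i j * (if j = a then t else 0))
       + (\<Sum>i\<in>I. \<Sum>j\<in>I. (if i = a then t else 0) * M i j * x j)
       + (\<Sum>i\<in>I. \<Sum>j\<in>I. (if i = a then t else 0) * M i j * (if j = a then t else 0))"
    by (simp add: algebra_simps sum.distrib)
  have e1: "(\<Sum>i\<in>I. \<Sum>j\<in>I. x i * M i j * (if j = a then t else 0)) = t * (\<Sum>i\<in>I. x i * M i a)"
  proof -
    have "(\<Sum>i\<in>I. \<Sum>j\<in>I. x i * M i j * (if j = a then t else 0))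
        = (\<Sum>i\<in>I. (\<Sum>j\<in>I. if j = a then x i * M i j * t else 0))"
      by (rule sum.cong) (auto intro!: sum.cong)
    also have "\<dots> = (\<Sum>i\<in>I. x i * M i a * t)" using assms by simp
    also have "\<dots> = t * (\<Sum>i\<in>I. x i * M i a)"
      by (auto simp: sum_distrib_left mult_ac intro!: sum.cong)
    finally show ?thesis .
  qed
  have e2: "(\<Sum>i\<in>I. \<Sum>j\<in>I. (if i = a then t else 0) * M i j * x j) = t * (\<Sum>i\<in>I. x i * M i a)"
  proof -
    have "(\<Sum>i\<in>I. \<Sum>j\<in>I. (if i = a then t else 0) * M i j * x j)
        = (\<Sum>i\<in>I. if i = a then (\<Sum>j\<in>I. t * M i j * x j) else 0)"
      by (rule sum.cong) auto
    also have "\<dots> = (\<Sum>j\<in>I. t * M a j * x j)" using assms by simp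
    also have "\<dots> = t * (\<Sum>i\<in>I. x i * M i a)"
      using assms by (auto simp: sum_distrib_left mult_ac intro!: sum.cong)
    finally show ?thesis .
  qed
  have e3: "(\<Sum>i\<in>I. \<Sum>j\<in>I. (if i = a then t else 0) * M i j * (if j = a then t else 0)) = t * t * M a a"
  proof -
    have "(\<Sum>i\<in>I. \<Sum>j\<in>I. (if i = a then t else 0) * M i j * (if j = a then t else 0))
        = (\<Sum>i\<in>I. if i = a then (\<Sum>j\<in>I. if j = a then t * M i j * t else 0) else 0)"
      by (rule sum.cong) (auto intro!: sum.cong)
    also have "\<dots> = t * t * M a a" using assms by simp
    finally show ?thesis .
  qed
  show ?thesis unfolding qf_def using e e1 e2 e3 by simp
qed

lemma psdon_diag:
  assumes "finite I" "a \<in> I" "psdon I M"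
  shows "0 \<le> M a a" and "M a a = 0 \<Longrightarrow> (\<Sum>i\<in>I. x i * M i a) = 0"
proof -
  have sym: "\<forall>i\<in>I. \<forall>j\<in>I. M i j = M j i" and q: "\<And>x. 0 \<le> qf I M x"
    using assms(3) unfolding psdon_def by auto
  have "0 \<le> qf I M (\<lambda>i. 0 + (if i = a then 1 else 0))" by (rule q)
  also have "\<dots> = M a a" using qf_shift[OF assms(1,2) sym, of "\<lambda>_. 0" 1]
    by (simp add: qf_def)
  finally show "0 \<le> M a a" .
  assume z: "M a a = 0"
  define r where "r = (\<Sum>i\<in>I. x i * M i a)"
  have "0 \<le> qf I M (\<lambda>i. x i + (if i = a then - (qf I M x + 1) / (2 * r) else 0))" by (rule q)
  also have "\<dots> = qf I M x + 2 * (- (qf I M x + 1) / (2 * r)) * r"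
    using qf_shift[OF assms(1,2) sym, of x] z unfolding r_def by simp
  finally have "r = 0 \<or> False" by (cases "r = 0") (auto simp: field_simps)
  then show "(\<Sum>i\<in>I. x i * M i a) = 0" unfolding r_def by simp
qed

lemma psdon_step:
  assumes "finite I" "a \<in> I" "psdon I X"
  shows "\<exists>v. psdon I (\<lambda>i j. X i j - v i * v j) \<and> (\<forall>j\<in>I. X a j - v a * v j = 0)"
proof -
  have sym: "\<forall>i\<in>I. \<forall>j\<in>I. X i j = X j i" and q: "\<And>x. 0 \<le> qf I X x"
    using assms(3) unfolding psdon_def by auto
  have d: "0 \<le> X a a" using psdon_diag[OF assms] by simp
  show ?thesis
  proof (cases "X a a = 0")
    case True
    have "X a j = 0" if "j \<in> I" for j
    proof -
      have "(\<Sum>i\<in>I. (if i = j then 1 else 0) * X i a) = 0"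
        using psdon_diag(2)[OF assms True] .
      moreover have "(\<Sum>i\<in>I. (if i = j then 1 else 0) * X i a) = (\<Sum>i\<in>I. if i = j then X i a else 0)"
        by (rule sum.cong) auto
      ultimately have "X j a = 0" using that assms(1) by simp
      then show ?thesis using that sym assms(2) by metis
    qed
    then show ?thesis using assms(3) by (intro exI[of _ "\<lambda>_. 0"]) simp
  next
    case False
    with d have pos: "X a a > 0" by simp
    define v where "v i = X i a / sqrt (X a a)" for i
    have vv: "v i * v j = X i a * X j a / X a a" for i j
      unfolding v_def using pos by (simp add: field_simps real_sqrt_mult[symmetric])
    have row: "\<forall>j\<in>I. X a j - v a * v j = 0"
      using pos sym assms(2) by (simp add: vv)
    have qq: "0 \<le> qf I (\<lambda>i j. X i j - v i * v j) x" for x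
    proof -
      define r where "r = (\<Sum>i\<in>I. x i * X i a)"
      have "0 \<le> qf I X (\<lambda>i. x i + (if i = a then - r / X a a else 0))" by (rule q)
      also have "\<dots> = qf I X x + 2 * (- r / X a a) * r + (- r / X a a) * (- r / X a a) * X a a"
        using qf_shift[OF assms(1,2) sym, of x] unfolding r_def by simp
      also have "\<dots> = qf I X x - r * r / X a a" using pos by (simp add: field_simps)
      also have "r * r / X a a = (\<Sum>i\<in>I. \<Sum>j\<in>I. x i * (v i * v j) * x j)"
        unfolding vv r_def using pos
        by (simp add: sum_distrib_left sum_distrib_right sum_divide_distrib mult_ac)
      also have "qf I X x - \<dots> = qf I (\<lambda>i j. X i j - v i * v j) x"
        unfolding qf_def by (simp add: sum_subtractf[symmetric] algebra_simps)
      finally show ?thesis .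
    qed
    have "psdon I (\<lambda>i j. X i j - v i * v j)"
      unfolding psdon_def using qq sym by (simp add: mult.commute)
    with row show ?thesis by blast
  qed
qed

lemma psdon_restrict:
  assumes "finite F" "a \<notin> F" "psdon (insert a F) M"
  shows "psdon F M"
proof -
  have "0 \<le> qf F M x" for x
  proof -
    define y where "y i = (if i \<in> F then x i else 0)" for i
    have "0 \<le> qf (insert a F) M y" using assms(3) unfolding psdon_def by blast
    also have "\<dots> = qf F M y" unfolding qf_def using assms(1,2)
      by (simp add: y_def)
    also have "\<dots> = qf F M x" unfolding qf_def y_def by (auto intro!: sum.cong)
    finally show ?thesis .
  qed
  then show ?thesis using assms(3) unfolding psdon_def by auto
qed

lemma psdon_trace:
  assumes "finite I" "psdon I X" "psdon I S"
  shows "0 \<le> (\<Sum>i\<in>I. \<Sum>j\<in>I. S i j * X i j)"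
  using assms
proof (induction I arbitrary: X rule: finite_induct)
  case empty
  then show ?case by simp
next
  case (insert a F)
  obtain v where v1: "psdon (insert a F) (\<lambda>i j. X i j - v i * v j)"
    and v2: "\<forall>j\<in>insert a F. X a j - v a * v j = 0"
    using psdon_step[OF _ _ insert.prems(1)] insert.hyps by auto
  define X' where "X' = (\<lambda>i j. X i j - v i * v j)"
  have symX': "\<forall>i\<in>insert a F. \<forall>j\<in>insert a F. X' i j = X' j i"
  proof -
    have "psdon (insert a F) X'" using v1 unfolding X'_def .
    then show ?thesis unfolding psdon_def by (elim conjE)
  qed
  have ra: "X' a j = 0" if "j \<in> insert a F" for j using v2 that unfolding X'_def by auto
  have ca: "X' j a = 0" if "j \<in> insert a F" for j using ra[OF that] symX' that insertI1 by metis
  have "(\<Sum>i\<in>insert a F. \<Sum>j\<in>insert a F. S i j * X i j)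
      = (\<Sum>i\<in>insert a F. \<Sum>j\<in>insert a F. S i j * X' i j + v i * S i j * v j)"
    unfolding X'_def by (intro sum.cong refl) (simp add: algebra_simps)
  also have "\<dots> = (\<Sum>i\<in>insert a F. \<Sum>j\<in>insert a F. S i j * X' i j) + qf (insert a F) S v"
    unfolding qf_def by (simp add: sum.distrib)
  also have "(\<Sum>i\<in>insert a F. \<Sum>j\<in>insert a F. S i j * X' i j) = (\<Sum>i\<in>F. \<Sum>j\<in>F. S i j * X' i j)"
  proof -
    have "(\<Sum>i\<in>insert a F. \<Sum>j\<in>insert a F. S i j * X' i j) = (\<Sum>i\<in>insert a F. \<Sum>j\<in>F. S i j * X' i j)"
    proof (rule sum.cong[OF refl])
      fix i assume "i \<in> insert a F"
      show "(\<Sum>j\<in>insert a F. S i j * X' i j) = (\<Sum>j\<in>F. S i j * X' i j)"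
        using insert.hyps ca \<open>i \<in> insert a F\<close> by simp
    qed
    also have "\<dots> = (\<Sum>i\<in>F. \<Sum>j\<in>F. S i j * X' i j)"
      using insert.hyps ra by simp
    finally show ?thesis .
  qed
  also have "0 \<le> (\<Sum>i\<in>F. \<Sum>j\<in>F. S i j * X' i j)"
  proof (rule insert.IH)
    show "psdon F X'" unfolding X'_def by (rule psdon_restrict[OF insert.hyps(1,2) v1])
    show "psdon F S" by (rule psdon_restrict[OF insert.hyps(1,2) insert.prems(2)])
  qed
  moreover have "0 \<le> qf (insert a F) S v" using insert.prems(2) unfolding psdon_def by blast
  ultimately show ?case by linarith
qed

lemma sym_mat_iff: "sym_mat X \<longleftrightarrow> (\<forall>i j. X$i$j = X$j$i)"
  unfolding sym_mat_def transpose_def vec_eq_iff by auto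

lemma frob_inner: "sym_mat X \<Longrightarrow> frob A X = A \<bullet> X"
  unfolding frob_def trace_def matrix_matrix_mult_def inner_vec_def sym_mat_iff
  by (simp add: inner_real_def)

lemma quad_eq: fixes A :: "real^'n^'n" shows "x \<bullet> (A *v x) = (\<Sum>i\<in>UNIV. \<Sum>j\<in>UNIV. x$i * A$i$j * x$j)"
  unfolding inner_vec_def matrix_vector_mult_def
  by (simp add: inner_real_def sum_distrib_left mult_ac)

lemma psd_psdon: "psd X \<Longrightarrow> psdon UNIV (\<lambda>i j. X$i$j)"
  unfolding psd_def psdon_def sym_mat_iff qf_def
proof (intro conjI allI ballI; (elim conjE)?)
  fix x :: "'a \<Rightarrow> real"
  assume "\<forall>x. 0 \<le> x \<bullet> (X *v x)"
  then have "0 \<le> (\<chi> i. x i) \<bullet> (X *v (\<chi> i. x i))" by blast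
  then show "0 \<le> (\<Sum>i\<in>UNIV. \<Sum>j\<in>UNIV. x i * X $ i $ j * x j)" by (simp add: quad_eq)
qed auto

lemma psd_inner_nonneg: "psd S \<Longrightarrow> psd X \<Longrightarrow> 0 \<le> S \<bullet> X"
  using psdon_trace[OF _ psd_psdon[of X] psd_psdon[of S]]
  unfolding inner_vec_def by (simp add: inner_real_def)

lemma transpose_inner: "transpose A \<bullet> X = A \<bullet> transpose X"
  unfolding inner_vec_def transpose_def by (simp add: inner_real_def, subst sum.swap, simp)

lemma quad_outer: fixes A :: "real^'n^'n" shows "x \<bullet> (A *v x) = A \<bullet> (\<chi> i j. x$i * x$j)"
  apply (subst quad_eq)
  unfolding inner_vec_def by (simp add: inner_real_def mult_ac)

lemma psd_outer: "psd (\<chi> i j. x$i * x$j)"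
proof -
  have "y \<bullet> ((\<chi> i j. x$i * x$j) *v y) = (x \<bullet> y) * (x \<bullet> y)" for y
    apply (subst quad_eq)
    unfolding inner_vec_def
    by (simp add: inner_real_def sum_distrib_left sum_distrib_right mult_ac)
  then show ?thesis unfolding psd_def sym_mat_iff by (simp add: mult.commute)
qed

lemma psd_add: "psd X \<Longrightarrow> psd Y \<Longrightarrow> psd (X + Y)"
  unfolding psd_def sym_mat_iff by (simp add: matrix_vector_mult_add_rdistrib inner_add_right add_nonneg_nonneg)

lemma psd_scale: "psd X \<Longrightarrow> 0 \<le> c \<Longrightarrow> psd (c *\<^sub>R X)"
  unfolding psd_def sym_mat_iff by (simp add: scaleR_matrix_vector_assoc[symmetric])

lemma psd_zero: "psd 0"
  unfolding psd_def sym_mat_iff by simp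

lemma closed_psd: "closed {Y :: real^'n^'n. psd Y}"
proof -
  have "{Y :: real^'n^'n. psd Y} = {Y. \<forall>i. \<forall>j. Y$i$j = Y$j$i} \<inter> {Y. \<forall>x. 0 \<le> (\<Sum>i\<in>UNIV. \<Sum>j\<in>UNIV. x$i * Y$i$j * x$j)}"
    unfolding psd_def sym_mat_iff quad_eq by auto
  also have "closed \<dots>"
    by (intro closed_Int closed_Collect_all closed_Collect_eq closed_Collect_le continuous_intros)
  finally show ?thesis .
qed

lemma frob_eq: "frob A X = (\<Sum>i\<in>UNIV. \<Sum>k\<in>UNIV. A$i$k * X$k$i)"
  unfolding frob_def trace_def matrix_matrix_mult_def by simp

lemma closed_Pset:
  fixes A2 :: "nat \<Rightarrow> real^'n^'n"
  assumes "\<forall>(i,j)\<in>J. finite (B i j)"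
  shows "closed (Pset m2 A2 b2 J B)"
proof -
  have "Pset m2 A2 b2 J B = {X. \<forall>i. \<forall>j. X$i$j = X$j$i}
      \<inter> (\<Inter>k\<in>{..<m2}. {X. (\<Sum>i\<in>UNIV. \<Sum>k'\<in>UNIV. A2 k$i$k' * X$k'$i) = b2 k})
      \<inter> (\<Inter>p\<in>J. (\<lambda>X. X$fst p$snd p) -` (real_of_int ` B (fst p) (snd p)))"
    unfolding Pset_def sym_mat_iff frob_eq by auto
  also have "closed \<dots>"
    apply (intro closed_Int closed_INT)
    subgoal by (intro closed_Collect_all closed_Collect_eq continuous_intros)
    subgoal by (intro ballI closed_Collect_eq continuous_intros)
    subgoal
    proof (intro ballI)
      fix p assume "p \<in> J"
      then have "finite (B (fst p) (snd p))" using assms by (cases p) auto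
      then have "closed (real_of_int ` B (fst p) (snd p))" by (intro finite_imp_closed finite_imageI)
      then show "closed ((\<lambda>X :: real^'n^'n. X $ fst p $ snd p) -` real_of_int ` B (fst p) (snd p))"
        by (rule closed_vimage) (intro continuous_intros)
    qed
    done
  finally show ?thesis .
qed

lemma transpose_sym: "sym_mat X \<Longrightarrow> transpose X = X"
  unfolding sym_mat_def by simp

lemma L_comb:
  assumes "\<forall>k<m1. A1 k \<bullet> W1 = b1 k" "\<forall>k<m1. A1 k \<bullet> W2 = (b1 k :: real)" "u + v = 1"
  shows "\<forall>k<m1. A1 k \<bullet> (u *\<^sub>R W1 + v *\<^sub>R W2) = b1 k"
proof (intro allI impI)
  fix k assume "k < m1"
  then have "A1 k \<bullet> (u *\<^sub>R W1 + v *\<^sub>R W2) = u * b1 k + v * b1 k"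
    using assms by (simp add: inner_add_right)
  also have "\<dots> = (u + v) * b1 k" by (simp add: distrib_right)
  finally have "A1 k \<bullet> (u *\<^sub>R W1 + v *\<^sub>R W2) = (u + v) * b1 k" .
  then show "A1 k \<bullet> (u *\<^sub>R W1 + v *\<^sub>R W2) = b1 k" using assms(3) by simp
qed

theorem theorem1:
  fixes C :: "real^'n^'n"
    and m1 m2 :: nat
    and A1 A2 :: "nat \<Rightarrow> real^'n^'n"
    and b1 b2 :: "nat \<Rightarrow> real"
    and J :: "('n \<times> 'n) set"
    and B :: "'n \<Rightarrow> 'n \<Rightarrow> int set"
    and Xh :: "real^'n^'n"
  assumes C_sym: "sym_mat C"
    and A1_sym: "\<forall>k<m1. sym_mat (A1 k)"
    and A2_sym: "\<forall>k<m2. sym_mat (A2 k)"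
    and B_fin: "\<forall>(i,j)\<in>J. finite (B i j)"
    and P_bdd: "bounded (Pset m2 A2 b2 J B)"
    and feas_ne: "misdp_feas m1 A1 b1 m2 A2 b2 J B \<noteq> {}"
    and feas_bdd: "bounded (misdp_feas m1 A1 b1 m2 A2 b2 J B)"
    and Xh_feas: "Xh \<in> relax_feas m1 A1 b1 (Pset m2 A2 b2 J B)"
    and Xh_opt: "\<forall>X \<in> relax_feas m1 A1 b1 (Pset m2 A2 b2 J B). frob C Xh \<le> frob C X"
  shows "z_LD C m1 A1 b1 (Pset m2 A2 b2 J B) = ereal (frob C Xh)"
proof -
  define P where "P = Pset m2 A2 b2 J B"
  define Q where "Q = convex hull P"
  define c where "c = frob C Xh"
  have XhQ: "Xh \<in> Q" and Xh_psd: "psd Xh" and Xh_A: "\<forall>k<m1. frob (A1 k) Xh = b1 k"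
    using Xh_feas unfolding relax_feas_def P_def Q_def by auto
  have Xh_sym: "sym_mat Xh" using Xh_psd psd_def by auto
  have P_sym: "sym_mat X" if "X \<in> P" for X using that unfolding P_def Pset_def by auto
  have Xh_A': "\<forall>k<m1. A1 k \<bullet> Xh = b1 k" using Xh_A frob_inner[OF Xh_sym] by simp
  have cXh: "c = C \<bullet> Xh" unfolding c_def using frob_inner[OF Xh_sym] .
  have relax: "c \<le> C \<bullet> X" if X: "X \<in> Q" "psd X" "\<forall>k<m1. A1 k \<bullet> X = b1 k" for X
  proof -
    have sym: "sym_mat X" using X(2) psd_def by auto
    have "X \<in> relax_feas m1 A1 b1 P" unfolding relax_feas_def
      using X frob_inner[OF sym] unfolding Q_def by auto
    then have "c \<le> frob C X" using Xh_opt unfolding P_def c_def by auto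
    then show ?thesis using frob_inner[OF sym] by simp
  qed
  have le: "z_LD C m1 A1 b1 P \<le> ereal c"
    unfolding z_LD_def
  proof (rule SUP_least)
    fix p assume "p \<in> {S :: real^'n^'n. psd S} \<times> (UNIV :: (nat \<Rightarrow> real) set)"
    then obtain S lam where p: "p = (S, lam)" and S: "psd S" by auto
    define G where "G = C - S + (\<Sum>k<m1. lam k *\<^sub>R A1 k)"
    define d where "d = - (\<Sum>k<m1. lam k * b1 k)"
    have fX: "frob C X - frob S X + (\<Sum>k<m1. lam k * (frob (A1 k) X - b1 k)) = G \<bullet> X + d"
      if "sym_mat X" for X
      using frob_inner[OF that] unfolding G_def d_def
      by (simp add: inner_diff_left inner_add_left inner_sum_left sum_subtractf right_diff_distrib)
    have "lag_g C m1 A1 b1 P S lam \<le> ereal (G \<bullet> Xh + d)"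
    proof (rule ccontr)
      assume "\<not> ?thesis"
      then have lt: "ereal (G \<bullet> Xh + d) < lag_g C m1 A1 b1 P S lam" by simp
      have "P \<subseteq> {X. G \<bullet> X > G \<bullet> Xh}"
      proof
        fix X assume X: "X \<in> P"
        have "lag_g C m1 A1 b1 P S lam \<le> ereal (frob C X - frob S X + (\<Sum>k<m1. lam k * (frob (A1 k) X - b1 k)))"
          unfolding lag_g_def using X by (rule INF_lower)
        then have "lag_g C m1 A1 b1 P S lam \<le> ereal (G \<bullet> X + d)"
          using fX[OF P_sym[OF X]] by simp
        then have "ereal (G \<bullet> Xh + d) < ereal (G \<bullet> X + d)"
          using lt by (rule order.strict_trans2[rotated])
        then show "X \<in> {X. G \<bullet> X > G \<bullet> Xh}" by simp
      qed
      then have "Q \<subseteq> {X. G \<bullet> X > G \<bullet> Xh}" unfolding Q_def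
        by (intro hull_minimal convex_halfspace_gt)
      with XhQ show False by auto
    qed
    also have "G \<bullet> Xh + d = c - S \<bullet> Xh"
      using fX[OF Xh_sym] Xh_A frob_inner[OF Xh_sym, of S] c_def by simp
    also have "\<dots> \<le> c" using psd_inner_nonneg[OF S Xh_psd] by simp
    finally show "(case p of (S, lam) \<Rightarrow> lag_g C m1 A1 b1 P S lam) \<le> ereal c" using p by simp
  qed
  have ge: "ereal (c - e) \<le> z_LD C m1 A1 b1 P" if e: "e > 0" for e
  proof -
    define L where "L = {W :: real^'n^'n. \<forall>k<m1. A1 k \<bullet> W = b1 k}"
    define K1 where "K1 = (\<lambda>X. (C \<bullet> X, X, X)) ` Q"
    define K2 where "K2 = {p :: real \<times> (real^'n^'n) \<times> (real^'n^'n). 0 \<le> fst p \<and> psd (- fst (snd p)) \<and> - snd (snd p) \<in> L}"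
    define T where "T = (\<Union>x\<in>K1. \<Union>y\<in>K2. {x + y})"
    have Pc: "compact P" unfolding P_def compact_eq_bounded_closed
      using P_bdd closed_Pset[OF B_fin] by simp
    have Qc: "compact Q" unfolding Q_def by (rule compact_convex_hull[OF Pc])
    have K1c: "compact K1" unfolding K1_def
      by (intro compact_continuous_image continuous_intros Qc)
    have lin: "linear (\<lambda>X :: real^'n^'n. (C \<bullet> X, X, X))"
      by (rule linearI) (simp_all add: inner_add_right)
    have K1v: "convex K1" unfolding K1_def Q_def
      by (rule convex_linear_image[OF lin convex_convex_hull])
    have Lc: "closed L"
    proof -
      have "L = (\<Inter>k\<in>{..<m1}. {W. A1 k \<bullet> W = b1 k})" unfolding L_def by auto
      also have "closed \<dots>" by (intro closed_INT ballI closed_Collect_eq continuous_intros)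
      finally show ?thesis .
    qed
    have K2c: "closed K2"
    proof -
      have "K2 = {p. 0 \<le> fst p} \<inter> (\<lambda>p. - fst (snd p)) -` {Y. psd Y} \<inter> (\<lambda>p. - snd (snd p)) -` L"
        unfolding K2_def by auto
      also have "closed \<dots>"
        by (intro closed_Int closed_Collect_le closed_vimage closed_psd Lc continuous_intros)
      finally show ?thesis .
    qed
    have K2v: "convex K2" unfolding convex_def
    proof (intro ballI allI impI)
      fix x y :: "real \<times> (real^'n^'n) \<times> (real^'n^'n)" and u v :: real
      assume x: "x \<in> K2" and y: "y \<in> K2" and uv: "0 \<le> u" "0 \<le> v" "u + v = 1"
      have 1: "0 \<le> fst (u *\<^sub>R x + v *\<^sub>R y)" using x y uv unfolding K2_def by simp
      have "psd (u *\<^sub>R (- fst (snd x)) + v *\<^sub>R (- fst (snd y)))"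
        using x y uv unfolding K2_def by (intro psd_add psd_scale) auto
      then have 2: "psd (- fst (snd (u *\<^sub>R x + v *\<^sub>R y)))" by (simp add: algebra_simps)
      have "u *\<^sub>R (- snd (snd x)) + v *\<^sub>R (- snd (snd y)) \<in> L"
        using x y uv L_comb[of m1 A1 "- snd (snd x)" b1 "- snd (snd y)" u v]
        unfolding K2_def L_def by auto
      then have 3: "- snd (snd (u *\<^sub>R x + v *\<^sub>R y)) \<in> L" by (simp add: algebra_simps)
      show "u *\<^sub>R x + v *\<^sub>R y \<in> K2" unfolding K2_def using 1 2 3 by simp
    qed
    have Tc: "closed T" unfolding T_def by (rule compact_closed_sums[OF K1c K2c])
    have Tv: "convex T" unfolding T_def by (rule convex_sums[OF K1v K2v])
    have memT: "(C \<bullet> X + s, X - Y, X - W) \<in> T" if "X \<in> Q" "0 \<le> s" "psd Y" "W \<in> L" for X s Y W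
    proof -
      have "(C \<bullet> X, X, X) \<in> K1" unfolding K1_def using that by auto
      moreover have "(s, - Y, - W) \<in> K2" unfolding K2_def using that by auto
      ultimately show ?thesis unfolding T_def by force
    qed
    define z0 where "z0 = (c - e, 0 :: real^'n^'n, 0 :: real^'n^'n)"
    have z0T: "z0 \<notin> T"
    proof
      assume "z0 \<in> T"
      then obtain x y where x: "x \<in> K1" and y: "y \<in> K2" and xy: "z0 = x + y"
        unfolding T_def by auto
      obtain X where X: "X \<in> Q" and xX: "x = (C \<bullet> X, X, X)" using x unfolding K1_def by auto
      have "X = - fst (snd y)" using xy xX unfolding z0_def by (cases y) (auto simp: eq_neg_iff_add_eq_0)
      then have Xpsd: "psd X" using y unfolding K2_def by simp
      have "X = - snd (snd y)" using xy xX unfolding z0_def by (cases y) (auto simp: eq_neg_iff_add_eq_0)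
      then have XL: "X \<in> L" using y unfolding K2_def by simp
      have "c - e = C \<bullet> X + fst y" using xy xX unfolding z0_def by (cases y) (auto simp: eq_neg_iff_add_eq_0)
      moreover have "0 \<le> fst y" using y unfolding K2_def by simp
      moreover have "c \<le> C \<bullet> X" using relax[OF X Xpsd] XL unfolding L_def by simp
      ultimately show False using e by simp
    qed
    obtain a b where ab1: "a \<bullet> z0 < b" and ab2: "\<forall>x\<in>T. b < a \<bullet> x"
      using separating_hyperplane_closed_point[OF Tv Tc z0T] by blast
    obtain \<alpha> S' M where a: "a = (\<alpha>, S', M)" by (cases a) auto
    have key: "b < \<alpha> * (C \<bullet> X + s) + S' \<bullet> (X - Y) + M \<bullet> (X - W)"
      if "X \<in> Q" "0 \<le> s" "psd Y" "W \<in> L" for X s Y W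
    proof -
      have "b < (\<alpha>, S', M) \<bullet> (C \<bullet> X + s, X - Y, X - W)" using ab2 memT[OF that] unfolding a by blast
      then show ?thesis by (simp add: add.assoc)
    qed
    have az0: "\<alpha> * (c - e) < b" using ab1 unfolding a z0_def by simp
    have XhL: "Xh \<in> L" using Xh_A' unfolding L_def by simp
    have k0: "b < \<alpha> * c" using key[OF XhQ order.refl Xh_psd XhL] cXh by simp
    have apos: "\<alpha> > 0"
    proof -
      have "\<alpha> * e > 0" using az0 k0 by (simp add: algebra_simps)
      then show ?thesis using e by (simp add: zero_less_mult_iff)
    qed
    have Sneg: "S' \<bullet> Y0 \<le> 0" if Y0: "psd Y0" for Y0
    proof (rule ccontr)
      assume "\<not> ?thesis"
      then have pos: "S' \<bullet> Y0 > 0" by simp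
      define t where "t = (\<alpha> * c - b) / (S' \<bullet> Y0)"
      have t0: "0 \<le> t" unfolding t_def using pos k0 by simp
      have "psd (Xh + t *\<^sub>R Y0)" by (intro psd_add psd_scale Xh_psd Y0 t0)
      from key[OF XhQ order.refl this XhL]
      have "b < \<alpha> * c - t * (S' \<bullet> Y0)" using cXh by (simp add: inner_diff_right)
      also have "t * (S' \<bullet> Y0) = \<alpha> * c - b" unfolding t_def using pos by simp
      finally show False by simp
    qed
    have Morth: "M \<bullet> D = 0" if D: "\<forall>k<m1. A1 k \<bullet> D = 0" for D
    proof (rule ccontr)
      assume nz: "M \<bullet> D \<noteq> 0"
      define t where "t = (\<alpha> * c - b) / (M \<bullet> D)"
      have "Xh + t *\<^sub>R D \<in> L" using XhL D unfolding L_def by (simp add: inner_add_right)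
      from key[OF XhQ order.refl Xh_psd this]
      have "b < \<alpha> * c - t * (M \<bullet> D)" using cXh by (simp add: inner_diff_right)
      also have "t * (M \<bullet> D) = \<alpha> * c - b" unfolding t_def using nz by simp
      finally show False by simp
    qed
    define V where "V = range (\<lambda>lam. (\<Sum>k<m1. lam k *\<^sub>R A1 k))"
    have Vsub: "subspace V" unfolding subspace_def V_def
    proof (intro conjI ballI allI)
      show "0 \<in> range (\<lambda>lam. (\<Sum>k<m1. lam k *\<^sub>R A1 k))"
        by (rule range_eqI[of _ _ "\<lambda>_. 0"]) simp
    next
      fix x y assume "x \<in> range (\<lambda>lam. (\<Sum>k<m1. lam k *\<^sub>R A1 k))" "y \<in> range (\<lambda>lam. (\<Sum>k<m1. lam k *\<^sub>R A1 k))"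
      then obtain l1 l2 where "x = (\<Sum>k<m1. l1 k *\<^sub>R A1 k)" "y = (\<Sum>k<m1. l2 k *\<^sub>R A1 k)" by auto
      then show "x + y \<in> range (\<lambda>lam. (\<Sum>k<m1. lam k *\<^sub>R A1 k))"
        by (intro range_eqI[of _ _ "\<lambda>k. l1 k + l2 k"]) (simp add: scaleR_add_left sum.distrib)
    next
      fix r :: real and x assume "x \<in> range (\<lambda>lam. (\<Sum>k<m1. lam k *\<^sub>R A1 k))"
      then obtain l1 where "x = (\<Sum>k<m1. l1 k *\<^sub>R A1 k)" by auto
      then show "r *\<^sub>R x \<in> range (\<lambda>lam. (\<Sum>k<m1. lam k *\<^sub>R A1 k))"
        by (intro range_eqI[of _ _ "\<lambda>k. r * l1 k"]) (simp add: scaleR_sum_right)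
    qed
    obtain p q where p: "p \<in> span V" and q: "\<And>w. w \<in> span V \<Longrightarrow> orthogonal q w" and Mpq: "M = p + q"
      using orthogonal_subspace_decomp_exists[of V M] by blast
    have spanV: "span V = V" using Vsub by (rule span_eq_iff[THEN iffD2])
    have A1V: "A1 k \<in> V" if "k < m1" for k
    proof -
      have "(\<Sum>j<m1. (if j = k then 1 else 0) *\<^sub>R A1 j) = (\<Sum>j<m1. if j = k then A1 j else 0)"
        by (rule sum.cong) auto
      also have "\<dots> = A1 k" using that by simp
      finally have "A1 k = (\<Sum>j<m1. (if j = k then 1 else 0) *\<^sub>R A1 j)" by (rule sym)
      then show ?thesis unfolding V_def by (rule range_eqI[where x="\<lambda>j. if j = k then 1 else 0"])
    qed
    have "\<forall>k<m1. A1 k \<bullet> q = 0"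
    proof (intro allI impI)
      fix k assume "k < m1"
      then have "orthogonal q (A1 k)" using q A1V spanV by blast
      then show "A1 k \<bullet> q = 0" by (metis inner_commute orthogonal_def)
    qed
    then have "M \<bullet> q = 0" by (rule Morth)
    moreover have "p \<bullet> q = 0" using q[OF p] unfolding orthogonal_def by (simp add: inner_commute)
    ultimately have "q \<bullet> q = 0" unfolding Mpq inner_add_left by linarith
    then have "q = 0" by simp
    then have "M = p" using Mpq by simp
    then have "M \<in> V" using p spanV by simp
    then obtain lam where Mlam: "M = (\<Sum>k<m1. lam k *\<^sub>R A1 k)" unfolding V_def by auto
    define S where "S = (- (1 / (2 * \<alpha>))) *\<^sub>R (S' + transpose S')"
    define mu where "mu k = lam k / \<alpha>" for k
    have SX: "S \<bullet> X = - (S' \<bullet> X) / \<alpha>" if "sym_mat X" for X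
    proof -
      have "transpose S' \<bullet> X = S' \<bullet> X" using transpose_inner[of S' X] transpose_sym[OF that] by simp
      moreover have "S \<bullet> X = (- (1 / (2 * \<alpha>))) * (S' \<bullet> X + transpose S' \<bullet> X)"
        unfolding S_def by (simp only: inner_scaleR_left inner_add_left)
      ultimately show ?thesis using apos by (simp add: field_simps)
    qed
    have Spsd: "psd S"
    proof -
      have "sym_mat S" unfolding sym_mat_iff S_def by (simp add: transpose_def)
      moreover have "0 \<le> x \<bullet> (S *v x)" for x
      proof -
        define Ox where "Ox = (\<chi> i j. x$i * x$j :: real^'n^'n)"
        have Osym: "sym_mat Ox" unfolding sym_mat_iff Ox_def by (simp add: mult.commute)
        have "x \<bullet> (S *v x) = S \<bullet> Ox" unfolding Ox_def by (rule quad_outer)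
        also have "\<dots> = - (S' \<bullet> Ox) / \<alpha>" by (rule SX[OF Osym])
        finally show ?thesis using Sneg[OF psd_outer[of x]] apos unfolding Ox_def
          by (simp add: divide_nonpos_pos)
      qed
      ultimately show ?thesis unfolding psd_def by simp
    qed
    have "ereal (c - e) \<le> lag_g C m1 A1 b1 P S mu"
      unfolding lag_g_def
    proof (rule INF_greatest)
      fix X assume X: "X \<in> P"
      have sym: "sym_mat X" by (rule P_sym[OF X])
      have XQ: "X \<in> Q" unfolding Q_def using X by (rule hull_inc)
      have kk: "b < \<alpha> * (C \<bullet> X) + S' \<bullet> X + M \<bullet> (X - Xh)"
        using key[OF XQ order.refl psd_zero XhL] by simp
      have MX: "M \<bullet> (X - Xh) = (\<Sum>k<m1. lam k * (frob (A1 k) X - b1 k))"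
        unfolding Mlam using Xh_A' frob_inner[OF sym]
        by (simp add: inner_sum_left inner_diff_right right_diff_distrib sum_subtractf)
      have "c - e < C \<bullet> X + (S' \<bullet> X) / \<alpha> + (M \<bullet> (X - Xh)) / \<alpha>"
      proof -
        have "\<alpha> * (c - e) < \<alpha> * (C \<bullet> X + (S' \<bullet> X) / \<alpha> + (M \<bullet> (X - Xh)) / \<alpha>)"
        proof -
          have "\<alpha> * (C \<bullet> X + (S' \<bullet> X) / \<alpha> + (M \<bullet> (X - Xh)) / \<alpha>) = \<alpha> * (C \<bullet> X) + S' \<bullet> X + M \<bullet> (X - Xh)"
          proof -
            have h1: "\<alpha> * ((S' \<bullet> X) / \<alpha>) = S' \<bullet> X" using apos by simp
            have h2: "\<alpha> * ((M \<bullet> (X - Xh)) / \<alpha>) = M \<bullet> (X - Xh)" using apos by simp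
            show ?thesis by (simp only: distrib_left h1 h2)
          qed
          then show ?thesis using az0 kk by linarith
        qed
        then show ?thesis using apos by (simp add: mult_less_cancel_left_pos)
      qed
      also have "\<dots> = frob C X - frob S X + (\<Sum>k<m1. mu k * (frob (A1 k) X - b1 k))"
        using frob_inner[OF sym] SX[OF sym] MX apos unfolding mu_def
        by (simp add: sum_divide_distrib)
      finally show "ereal (c - e) \<le> ereal (frob C X - frob S X + (\<Sum>k<m1. mu k * (frob (A1 k) X - b1 k)))"
        by simp
    qed
    also have "\<dots> \<le> z_LD C m1 A1 b1 P" unfolding z_LD_def
      by (rule SUP_upper2[of "(S, mu)"]) (use Spsd in auto)
    finally show ?thesis .
  qed
  show ?thesis
  proof (cases "z_LD C m1 A1 b1 P")
    case (real r)
    have "c - e \<le> r" if "e > 0" for e using ge[OF that] real by simp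
    then have "c \<le> r"
    proof -
      assume h: "\<And>e. e > 0 \<Longrightarrow> c - e \<le> r"
      show "c \<le> r"
      proof (rule ccontr)
        assume "\<not> c \<le> r"
        then have "(c - r) / 2 > 0" by simp
        from h[OF this] have "c - (c - r) / 2 \<le> r" .
        moreover have "c - (c - r) / 2 = (c + r) / 2" by (simp add: field_simps)
        ultimately have "c + r \<le> 2 * r" by simp
        with \<open>\<not> c \<le> r\<close> show False by simp
      qed
    qed
    moreover have "r \<le> c" using le real by simp
    ultimately show ?thesis using real P_def c_def by simp
  next
    case PInf
    then show ?thesis using le by simp
  next
    case MInf
    then show ?thesis using ge[of 1] by simp
  qed
qed

end
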